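(* Let $m,n,s,k$ be even integers such that $2\leqslant s\leqslant n$, $2\leqslant k\leqslant m$ and $ms=nk$, and let $c\geqslant 1$. For every abelian group $\Gamma$ of order $nkc$ there exists an $\mathrm{MRS}_\Gamma(m,n;s,k;c)$.
   Context: For positive integers $m,n,s,k,c$ and an abelian group $\Gamma$ of order $nkc$, an $\mathrm{MRS}_\Gamma(m,n;s,k;c)$ is a set of $c$ partially filled $m\times n$ arrays (some cells may be empty) with entries in $\Gamma$ such that: every element of $\Gamma$ appears exactly once and in a unique array; in every array each row contains exactly $s$ filled cells and each column contains exactly $k$ filled cells; and there exist $\omega,\delta\in\Gamma$ such that in every array each row sum is $\omega$ and each column sum is $\delta$. *)

theory Defs
  imports Main
begin

text \<open>A family of c partially filled m x n arrays with entries in the abelian group 'a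
  is modelled as A :: nat => nat => nat => 'a option, where A t i j is the content of
  cell (i,j) (row i < m, column j < n) of array t < c; None means the cell is empty.
  Values of A outside this index range are irrelevant.\<close>

definition filled_cells :: "nat \<Rightarrow> nat \<Rightarrow> nat \<Rightarrow> (nat \<Rightarrow> nat \<Rightarrow> nat \<Rightarrow> 'a option) \<Rightarrow> (nat \<times> nat \<times> nat) set" where
  "filled_cells m n c A = {(t, i, j). t < c \<and> i < m \<and> j < n \<and> A t i j \<noteq> None}"

definition is_MRS :: "nat \<Rightarrow> nat \<Rightarrow> nat \<Rightarrow> nat \<Rightarrow> nat \<Rightarrow> (nat \<Rightarrow> nat \<Rightarrow> nat \<Rightarrow> 'a::ab_group_add option) \<Rightarrow> bool" where
  "is_MRS m n s k c A \<longleftrightarrow>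
     (\<forall>g::'a. \<exists>!p. p \<in> filled_cells m n c A \<and> A (fst p) (fst (snd p)) (snd (snd p)) = Some g) \<and>
     (\<forall>t<c. \<forall>i<m. card {j. j < n \<and> A t i j \<noteq> None} = s) \<and>
     (\<forall>t<c. \<forall>j<n. card {i. i < m \<and> A t i j \<noteq> None} = k) \<and>
     (\<exists>\<omega> \<delta>.
        (\<forall>t<c. \<forall>i<m. (\<Sum>j | j < n \<and> A t i j \<noteq> None. the (A t i j)) = \<omega>) \<and>
        (\<forall>t<c. \<forall>j<n. (\<Sum>i | i < m \<and> A t i j \<noteq> None. the (A t i j)) = \<delta>))"

end

theory Submission
  imports Defs
begin


lemma neg_fix_parity:
  fixes S :: "'a::ab_group_add set"
  assumes "finite S" "\<And>x. x \<in> S \<Longrightarrow> -x \<in> S"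
  shows "even (card S) \<longleftrightarrow> even (card {x\<in>S. -x = x})"
  using assms
proof (induction "card S" arbitrary: S rule: less_induct)
  case less
  show ?case
  proof (cases "\<exists>x\<in>S. -x \<noteq> x")
    case True
    then obtain x where x: "x \<in> S" "-x \<noteq> x" by blast
    define S' where "S' = S - {x, -x}"
    have fin: "finite S'" using less.prems by (simp add: S'_def)
    have cl: "\<And>y. y \<in> S' \<Longrightarrow> -y \<in> S'"
      using less.prems(2) by (auto simp: S'_def minus_equation_iff)
    have sub: "{x, -x} \<subseteq> S" using x less.prems(2) by auto
    have c2: "card {x, -x} = 2" using x by auto
    have cS: "card S = card S' + 2"
      using card_Diff_subset[OF _ sub] c2 less.prems(1) card_mono[OF less.prems(1) sub]
      by (simp add: S'_def)
    have fixeq: "{y\<in>S'. -y = y} = {y\<in>S. -y = y}" using x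
      by (auto simp: S'_def)
    have "card S' < card S" using cS by simp
    from less.hyps[OF this fin cl] show ?thesis using cS fixeq by simp
  next
    case False
    then have "{x\<in>S. -x = x} = S" by auto
    then show ?thesis by simp
  qed
qed

lemma exists_involution:
  assumes "even (card (UNIV::'a::{ab_group_add,finite} set))"
  shows "\<exists>u::'a. u \<noteq> 0 \<and> u + u = 0"
proof -
  have "even (card {x::'a. -x = x})"
    using neg_fix_parity[of "UNIV::'a set"] assms by simp
  moreover have "(0::'a) \<in> {x::'a. -x = x}" by simp
  ultimately have "{x::'a. -x = x} \<noteq> {0}" by (intro notI) simp
  then obtain u :: 'a where u: "u \<noteq> 0" "-u = u" using \<open>(0::'a) \<in> {x::'a. -x = x}\<close> by blast
  have "u + u = -u + u" using u(2) by simp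
  also have "\<dots> = 0" by simp
  finally show ?thesis using u(1) by blast
qed

lemma good_uq:
  assumes "4 dvd (card (UNIV::'a::{ab_group_add,finite} set))"
  shows "\<exists>u q::'a. u \<noteq> 0 \<and> u + u = 0 \<and> (\<forall>a. a + a \<noteq> q \<and> a + a \<noteq> q + u)"
proof -
  have "(2::nat) dvd 4" by simp
  from dvd_trans[OF this assms] have ev: "even (card (UNIV::'a set))" .
  obtain u :: 'a where u: "u \<noteq> 0" "u + u = 0"
    using exists_involution[OF ev] by blast
  define K where "K = {x::'a. x + x = 0}"
  define D where "D = range (\<lambda>a::'a. a + a)"
  have fib: "{a. a + a = y} = (\<lambda>k. k + b) ` K" if yb: "y = b + b" for y b :: 'a
  proof (rule set_eqI, rule iffI)
    fix a assume "a \<in> {a. a + a = y}"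
    then have ay: "a + a = y" by simp
    have "(a - b) + (a - b) = (a + a) - (b + b)" by (simp add: algebra_simps)
    also have "\<dots> = 0" using ay yb by simp
    finally have "a - b \<in> K" by (simp add: K_def)
    then show "a \<in> (\<lambda>k. k + b) ` K" by (rule rev_image_eqI) simp
  next
    fix a assume "a \<in> (\<lambda>k. k + b) ` K"
    then obtain k where k: "k + k = 0" "a = k + b" by (auto simp: K_def)
    have "(k + b) + (k + b) = (k + k) + (b + b)" by (simp add: algebra_simps)
    then show "a \<in> {a. a + a = y}" using k yb by simp
  qed
  have cfib: "card {a. a + a = y} = card K" if yD: "y \<in> D" for y
  proof -
    obtain b where "y = b + b" using yD unfolding D_def by blast
    then show ?thesis using fib[of y b] by (simp add: card_image inj_on_def)
  qed
  have U: "(UNIV::'a set) = (\<Union>y\<in>D. {a. a + a = y})" by (auto simp: D_def)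
  have "card (UNIV::'a set) = (\<Sum>y\<in>D. card {a::'a. a + a = y})"
    unfolding U by (rule card_UN_disjoint) auto
  also have "\<dots> = card D * card K" using cfib by simp
  finally have cU: "card (UNIV::'a set) = card D * card K" .
  have uK: "u \<in> K" "0 \<in> K" using u by (auto simp: K_def)
  show ?thesis
  proof (cases "card K \<ge> 3")
    case True
    have "card (D \<union> (\<lambda>y. y + u) ` D) \<le> card D + card D"
      using card_Un_le[of D "(\<lambda>y. y + u) ` D"] card_image_le[of D "\<lambda>y. y + u"] by simp
    also have "\<dots> < card (UNIV::'a set)"
    proof -
      have "card D > 0" proof -
      have "card (UNIV::'a set) > 0" by (simp add: card_gt_0_iff)
      then show ?thesis using cU by simp
    qed
      moreover have "card D * 3 \<le> card D * card K" using True by simp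
      ultimately show ?thesis using cU by linarith
    qed
    finally have "D \<union> (\<lambda>y. y + u) ` D \<noteq> UNIV" by auto
    then obtain q where q: "q \<notin> D \<union> (\<lambda>y. y + u) ` D" by blast
    have "\<forall>a. a + a \<noteq> q \<and> a + a \<noteq> q + u"
    proof (intro allI conjI notI)
      fix a assume "a + a = q" then show False using q by (auto simp: D_def)
    next
      fix a assume h: "a + a = q + u"
      have "q = q + u + u" using u(2) by (simp add: add.assoc)
      then have "q = (a + a) + u" using h by simp
      then show False using q by (auto simp: D_def)
    qed
    then show ?thesis using u by blast
  next
    case False
    have "K \<subseteq> {0, u}"
    proof
      fix x assume "x \<in> K"
      show "x \<in> {0, u}"
      proof (rule ccontr)
        assume "x \<notin> {0, u}"
        then have "{0, u, x} \<subseteq> K" using uK \<open>x \<in> K\<close> by auto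
        moreover have "card {0, u, x} = 3" using \<open>x \<notin> {0, u}\<close> u by auto
        ultimately show False using False card_mono[of K "{0,u,x}"] by simp
      qed
    qed
    with uK have Keq: "K = {0, u}" by auto
    have cK: "card K = 2" using Keq u by simp
    have evD: "even (card D)"
    proof -
      have "4 dvd card D * 2" using assms cU cK by simp
      then show ?thesis by presburger
    qed
    have Dcl: "\<And>x. x \<in> D \<Longrightarrow> -x \<in> D"
    proof -
      fix x assume "x \<in> D"
      then obtain b where "x = b + b" by (auto simp: D_def)
      then have "-x = (-b) + (-b)" by simp
      then show "-x \<in> D" unfolding D_def by (rule range_eqI)
    qed
    have "even (card {x\<in>D. -x = x})" using neg_fix_parity[OF finite Dcl] evD by simp
    moreover have z: "(0::'a) \<in> {x\<in>D. -x = x}"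
    proof -
      have "(0::'a) = 0 + 0" by simp
      then have "(0::'a) \<in> D" unfolding D_def by (rule range_eqI)
      then show ?thesis by simp
    qed
    ultimately have "{x\<in>D. -x = x} - {0} \<noteq> {}"
    proof (intro notI)
      assume "{x\<in>D. -x = x} - {0} = {}"
      with z have "{x\<in>D. -x = x} = {0}" by auto
      then have "card {x\<in>D. -x = x} = 1" by simp
      then show False using \<open>even (card {x\<in>D. -x = x})\<close> by simp
    qed
    then obtain v where "v \<in> {x\<in>D. -x = x} - {0}" by blast
    then have v: "v \<in> D" "-v = v" "v \<noteq> 0" by auto
    have "v + v = -v + v" using v(2) by simp
    also have "\<dots> = 0" by simp
    finally have "v \<in> K" by (simp add: K_def)
    then have "v = u" using Keq v by auto
    then obtain b where b: "u = b + b" using v by (auto simp: D_def)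
    have "card D > 0" proof -
      have "card (UNIV::'a set) > 0" by (simp add: card_gt_0_iff)
      then show ?thesis using cU by simp
    qed
    then have "card D < card (UNIV::'a set)" using cU cK by simp
    then have "D \<noteq> UNIV" by auto
    then obtain q where q: "q \<notin> D" by blast
    have "\<forall>a. a + a \<noteq> q \<and> a + a \<noteq> q + u"
    proof (intro allI conjI notI)
      fix a assume "a + a = q" then show False using q by (auto simp: D_def)
    next
      fix a assume h: "a + a = q + u"
      have "q = q + u + u" using u(2) by (simp add: add.assoc)
      then have "q = (a + a) + u" using h by simp
      then have "q = (a + b) + (a + b)" using b by (simp add: algebra_simps)
      then show False using q by (auto simp: D_def)
    qed
    then show ?thesis using u by blast
  qed
qed



definition lpos :: "nat \<Rightarrow> nat \<Rightarrow> nat \<Rightarrow> nat \<Rightarrow> nat" where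
  "lpos N S i j = nat ((int j - int i * int S) mod int N)"

lemma lpos_lt: "0 < N \<Longrightarrow> lpos N S i j < N"
  unfolding lpos_def by (simp add: nat_less_iff)

lemma lpos_A1:
  assumes "0 < N" "l < N"
  shows "lpos N S i ((i*S + l) mod N) = l"
proof -
  have "int ((i*S + l) mod N) = (int i * int S + int l) mod int N"
    by (simp add: of_nat_mod)
  then have "(int ((i*S + l) mod N) - int i * int S) mod int N
      = ((int i * int S + int l) - int i * int S) mod int N"
    by (simp add: mod_diff_left_eq)
  also have "\<dots> = int l" using assms by simp
  finally show ?thesis unfolding lpos_def by simp
qed

lemma lpos_A2:
  assumes "0 < N" "j < N"
  shows "(i*S + lpos N S i j) mod N = j"
proof -
  have nn: "0 \<le> (int j - int i * int S) mod int N" using assms by simp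
  have "int ((i*S + lpos N S i j) mod N) = (int i * int S + (int j - int i * int S) mod int N) mod int N"
    unfolding lpos_def using nn by (simp add: of_nat_mod)
  also have "\<dots> = (int i * int S + (int j - int i * int S)) mod int N"
    by (simp add: mod_add_right_eq)
  also have "\<dots> = int j" using assms by simp
  finally show ?thesis by linarith
qed

lemma row_set:
  assumes "0 < N" "S \<le> N"
  shows "{j. j < N \<and> lpos N S i j < S} = (\<lambda>l. (i*S+l) mod N) ` {..<S}"
    and "inj_on (\<lambda>l. (i*S+l) mod N) {..<S}"
proof -
  show "{j. j < N \<and> lpos N S i j < S} = (\<lambda>l. (i*S+l) mod N) ` {..<S}"
  proof (rule set_eqI, rule iffI)
    fix j assume "j \<in> {j. j < N \<and> lpos N S i j < S}"
    then have j: "j < N" "lpos N S i j < S" by auto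
    have "j = (i*S + lpos N S i j) mod N" using lpos_A2[OF assms(1) j(1)] by simp
    moreover have "lpos N S i j \<in> {..<S}" using j(2) by simp
    ultimately show "j \<in> (\<lambda>l. (i*S+l) mod N) ` {..<S}" by (rule image_eqI)
  next
    fix j assume "j \<in> (\<lambda>l. (i*S+l) mod N) ` {..<S}"
    then obtain l where l: "l < S" "j = (i*S+l) mod N" by auto
    have lN: "l < N" using l(1) assms(2) by linarith
    have "lpos N S i j = l" unfolding l(2) by (rule lpos_A1[OF assms(1) lN])
    moreover have "j < N" unfolding l(2) using assms(1) by simp
    ultimately show "j \<in> {j. j < N \<and> lpos N S i j < S}" using l(1) by simp
  qed
  show "inj_on (\<lambda>l. (i*S+l) mod N) {..<S}"
  proof (rule inj_onI)
    fix l1 l2 assume h: "l1 \<in> {..<S}" "l2 \<in> {..<S}" "(i*S+l1) mod N = (i*S+l2) mod N"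
    have l1: "l1 < N" using h(1) assms(2) by simp
    have l2: "l2 < N" using h(2) assms(2) by simp
    have "l1 = lpos N S i ((i*S+l1) mod N)" using lpos_A1[OF assms(1) l1] by simp
    also have "\<dots> = lpos N S i ((i*S+l2) mod N)" using h(3) by simp
    also have "\<dots> = l2" using lpos_A1[OF assms(1) l2] by simp
    finally show "l1 = l2" .
  qed
qed

lemma card_mod_class:
  assumes "0 < N" "j < N"
  shows "card {x. x < N * K \<and> x mod N = j} = K"
proof -
  have "{x. x < N * K \<and> x mod N = j} = (\<lambda>y. y * N + j) ` {..<K}"
  proof (rule set_eqI, rule iffI)
    fix x assume "x \<in> {x. x < N * K \<and> x mod N = j}"
    then have x: "x < N * K" "x mod N = j" by auto
    have "x = (x div N) * N + j" using x(2) div_mult_mod_eq[of x N] by simp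
    moreover have "x div N < K" using x(1) by (simp add: div_less_iff_less_mult mult.commute assms)
    ultimately show "x \<in> (\<lambda>y. y * N + j) ` {..<K}" by blast
  next
    fix x assume "x \<in> (\<lambda>y. y * N + j) ` {..<K}"
    then obtain y where y: "y < K" "x = y * N + j" by auto
    have "y * N + j < y * N + N" using assms by simp
    also have "\<dots> = (y + 1) * N" by simp
    also have "\<dots> \<le> K * N" using y(1) by (intro mult_le_mono1) simp
    finally show "x \<in> {x. x < N * K \<and> x mod N = j}" using y assms by (simp add: mult.commute)
  qed
  moreover have "inj_on (\<lambda>y. y * N + j) {..<K}" using assms by (auto simp: inj_on_def)
  ultimately show ?thesis by (simp add: card_image)
qed

lemma col_card:
  assumes "0 < N" "0 < S" "S \<le> N" "M * S = N * K" "j < N"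
  shows "card {i. i < M \<and> lpos N S i j < S} = K"
proof -
  let ?X = "{x. x < N * K \<and> x mod N = j}"
  let ?F = "{i. i < M \<and> lpos N S i j < S}"
  have "bij_betw (\<lambda>x. x div S) ?X ?F"
  proof (rule bij_betw_byWitness[where f' = "\<lambda>i. i * S + lpos N S i j"])
    show "\<forall>x\<in>?X. (x div S) * S + lpos N S (x div S) j = x"
    proof
      fix x assume "x \<in> ?X"
      then have x: "x < N * K" "x mod N = j" by auto
      have xe: "x = (x div S) * S + x mod S" by simp
      have "lpos N S (x div S) j = lpos N S (x div S) (((x div S) * S + x mod S) mod N)"
        using x(2) xe by simp
      also have "\<dots> = x mod S"
      proof -
        have "x mod S < N" using mod_less_divisor[OF assms(2), of x] assms(3) by linarith
        then show ?thesis by (rule lpos_A1[OF assms(1)])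
      qed
      finally show "(x div S) * S + lpos N S (x div S) j = x" by simp
    qed
    show "\<forall>i\<in>?F. (i * S + lpos N S i j) div S = i"
      using assms(2) by auto
    show "(\<lambda>x. x div S) ` ?X \<subseteq> ?F"
    proof
      fix i assume "i \<in> (\<lambda>x. x div S) ` ?X"
      then obtain x where x: "x < N * K" "x mod N = j" "i = x div S" by auto
      have xe: "x = i * S + x mod S" using x(3) by simp
      have "x < M * S" using x(1) assms(4) by simp
      then have "i < M" using x(3) assms(2) by (simp add: div_less_iff_less_mult)
      moreover have "lpos N S i j = x mod S"
      proof -
        have "lpos N S i j = lpos N S i ((i * S + x mod S) mod N)" using x(2) xe by simp
        also have "\<dots> = x mod S"
        proof -
          have "x mod S < N" using mod_less_divisor[OF assms(2), of x] assms(3) by linarith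
          then show ?thesis by (rule lpos_A1[OF assms(1)])
        qed
        finally show ?thesis .
      qed
      ultimately show "i \<in> ?F" using assms(2) by simp
    qed
    show "(\<lambda>i. i * S + lpos N S i j) ` ?F \<subseteq> ?X"
    proof
      fix x assume "x \<in> (\<lambda>i. i * S + lpos N S i j) ` ?F"
      then obtain i where i: "i < M" "lpos N S i j < S" "x = i * S + lpos N S i j" by auto
      have "x < i * S + S" using i by simp
      also have "\<dots> = (i + 1) * S" by simp
      also have "\<dots> \<le> M * S" using i(1) by (intro mult_le_mono1) simp
      finally have "x < N * K" using assms(4) by simp
      moreover have "x mod N = j" using i(3) lpos_A2[OF assms(1,5)] by simp
      ultimately show "x \<in> ?X" by simp
    qed
  qed
  then have "card ?F = card ?X" by (simp add: bij_betw_same_card)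
  also have "\<dots> = K" using card_mod_class[OF assms(1,5)] .
  finally show ?thesis .
qed

lemma double_set:
  assumes "P \<subseteq> {..<(M::nat)}"
  shows "{I. I < 2*M \<and> I div 2 \<in> P} = (\<lambda>i. 2*i) ` P \<union> (\<lambda>i. 2*i+1) ` P"
proof (rule set_eqI, rule iffI)
  fix I assume "I \<in> {I. I < 2*M \<and> I div 2 \<in> P}"
  then have I: "I div 2 \<in> P" by auto
  have "I = 2 * (I div 2) \<or> I = 2 * (I div 2) + 1" by presburger
  then show "I \<in> (\<lambda>i. 2*i) ` P \<union> (\<lambda>i. 2*i+1) ` P" using I by blast
next
  fix I assume "I \<in> (\<lambda>i. 2*i) ` P \<union> (\<lambda>i. 2*i+1) ` P"
  then obtain i where "i \<in> P" "I = 2*i \<or> I = 2*i+1" by blast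
  moreover have "i < M" using \<open>i \<in> P\<close> assms by auto
  ultimately show "I \<in> {I. I < 2*M \<and> I div 2 \<in> P}" by auto
qed

lemma double_card:
  assumes "P \<subseteq> {..<(M::nat)}"
  shows "card {I. I < 2*M \<and> I div 2 \<in> P} = 2 * card P"
proof -
  have fin: "finite P" using assms finite_subset by blast
  have d: "(\<lambda>i. 2*i) ` P \<inter> (\<lambda>i. 2*i+1) ` P = {}" by (auto dest: arg_cong[where f="\<lambda>x. x mod 2"])
  have "card ((\<lambda>i. 2*i) ` P \<union> (\<lambda>i. 2*i+1) ` P) = card ((\<lambda>i. 2*i) ` P) + card ((\<lambda>i. 2*i+1) ` P)"
    using fin d by (simp add: card_Un_disjoint)
  also have "\<dots> = 2 * card P" by (simp add: card_image inj_on_def)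
  finally show ?thesis using double_set[OF assms] by simp
qed

lemma double_sum:
  fixes g :: "nat \<Rightarrow> 'a::comm_monoid_add"
  assumes "P \<subseteq> {..<(M::nat)}"
  shows "(\<Sum>I\<in>{I. I < 2*M \<and> I div 2 \<in> P}. g I) = (\<Sum>i\<in>P. g (2*i) + g (2*i+1))"
proof -
  have fin: "finite P" using assms finite_subset by blast
  have d: "(\<lambda>i. 2*i) ` P \<inter> (\<lambda>i. 2*i+1) ` P = {}" by (auto dest: arg_cong[where f="\<lambda>x. x mod 2"])
  have "(\<Sum>I\<in>(\<lambda>i. 2*i) ` P \<union> (\<lambda>i. 2*i+1) ` P. g I) = (\<Sum>I\<in>(\<lambda>i. 2*i) ` P. g I) + (\<Sum>I\<in>(\<lambda>i. 2*i+1) ` P. g I)"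
    using fin d by (simp add: sum.union_disjoint)
  also have "\<dots> = (\<Sum>i\<in>P. g (2*i)) + (\<Sum>i\<in>P. g (2*i+1))"
    by (simp add: sum.reindex inj_on_def)
  also have "\<dots> = (\<Sum>i\<in>P. g (2*i) + g (2*i+1))" by (simp add: sum.distrib)
  finally show ?thesis using double_set[OF assms] by simp
qed

lemma sum_const_card:
  fixes c :: "'a::comm_monoid_add"
  assumes "finite A"
  shows "(\<Sum>x\<in>A. c) = (\<Sum>x<card A. c)"
  using assms by (induction A rule: finite_induct) (auto simp: add.commute)



lemma quad_exists:
  assumes "4 dvd card (UNIV::'a::{ab_group_add,finite} set)"
  shows "\<exists>(V::nat\<Rightarrow>nat\<Rightarrow>nat\<Rightarrow>'a) r q.
     bij_betw (\<lambda>(x,p,e). V x p e) ({..<card (UNIV::'a set) div 4} \<times> {..<2} \<times> {..<2}) UNIV \<and>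
     (\<forall>x. V x 0 0 + V x 0 1 = r \<and> V x 1 0 + V x 1 1 = r \<and> V x 0 0 + V x 1 0 = q \<and> V x 0 1 + V x 1 1 = q)"
proof -
  obtain u q :: 'a where u: "u \<noteq> 0" "u + u = 0" and hq: "\<forall>a. a + a \<noteq> q \<and> a + a \<noteq> q + u"
    using good_uq[OF assms] by blast
  have uu: "-u = u" using minus_unique[OF u(2)] .
  have n1: "q - (q - a + u) + u = a" for a by (simp add: algebra_simps)
  have n2: "q - (q - a + u) = a + u" for a
  proof -
    have "q - (q - a + u) = a + -u" by (simp add: algebra_simps)
    then show ?thesis using uu by simp
  qed
  have n3: "q - a + u + u = q - a" for a using u(2) by (simp add: add.assoc)
  have n4: "q - (q - a) + u = a + u" for a by simp
  have n5: "q - (q - a) = a" for a by simp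
  have n6: "q - (a + u) + u = q - a" for a by (simp add: algebra_simps)
  have n7: "q - (a + u) = q - a + u" for a
  proof -
    have "q - (a + u) = q - a + -u" by (simp add: algebra_simps)
    then show ?thesis using uu by simp
  qed
  have n8: "a + u + u = a" for a using u(2) by (simp add: add.assoc)
  define orb where "orb = (\<lambda>a. {a, q - a + u, q - a, a + u})"
  have d1: "a \<noteq> q - a + u" for a
  proof
    assume "a = q - a + u"
    then have "a + a = (q - a + u) + a" by simp
    also have "\<dots> = q + u" by (simp add: algebra_simps)
    finally show False using hq by blast
  qed
  have d2: "a \<noteq> q - a" for a
  proof
    assume "a = q - a"
    then have "a + a = (q - a) + a" by simp
    also have "\<dots> = q" by (simp add: algebra_simps)
    finally show False using hq by blast
  qed
  have d3: "a \<noteq> a + u" for a using u(1) by simp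
  have d4: "q - a + u \<noteq> q - a" for a using u(1) by simp
  have d5: "q - a + u \<noteq> a + u" for a using d2[of a] by simp
  have d6: "q - a \<noteq> a + u" for a
  proof
    assume "q - a = a + u"
    then have "q - a + u = a + u + u" by simp
    then have "q - a + u = a" using n8 by simp
    then show False using d1[of a] by simp
  qed
  have key: "orb b = orb a" if "b \<in> orb a" for a b
    using that unfolding orb_def
    by (auto simp only: n1 n2 n3 n4 n5 n6 n7 n8 insert_iff empty_iff insert_commute)
  have self: "a \<in> orb a" for a by (simp add: orb_def)
  have c4: "card (orb a) = 4" for a
    unfolding orb_def using d1[of a] d2[of a] d3[of a] d4[of a] d5[of a] d6[of a] by simp
  define Ob where "Ob = range orb"
  have disj: "o1 = o2" if h: "o1 \<in> Ob" "o2 \<in> Ob" "y \<in> o1" "y \<in> o2" for o1 o2 y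
  proof -
    obtain a1 where a1: "o1 = orb a1" using h(1) by (auto simp: Ob_def)
    obtain a2 where a2: "o2 = orb a2" using h(2) by (auto simp: Ob_def)
    have "orb y = orb a1" using key h(3) a1 by simp
    moreover have "orb y = orb a2" using key h(4) a2 by simp
    ultimately show ?thesis using a1 a2 by simp
  qed
  have UO: "\<Union>Ob = UNIV" using self by (auto simp: Ob_def)
  have "card (UNIV::'a set) = card (\<Union>Ob)" using UO by simp
  also have "\<dots> = sum card Ob"
  proof (rule card_Union_disjoint)
    show "pairwise disjnt Ob" unfolding pairwise_def disjnt_def using disj by blast
  qed simp
  also have "\<dots> = (\<Sum>ob\<in>Ob. 4)" by (rule sum.cong) (auto simp: Ob_def c4)
  also have "\<dots> = card Ob * 4" by simp
  finally have cO: "card (UNIV::'a set) div 4 = card Ob" by simp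
  obtain f where f: "bij_betw f {0..<card Ob} Ob" using ex_bij_betw_nat_finite[of Ob] by auto
  define rep where "rep = (\<lambda>ob::'a set. SOME a. a \<in> ob)"
  have rep: "orb (rep ob) = ob" if hob: "ob \<in> Ob" for ob
  proof -
    obtain a where a: "ob = orb a" using hob by (auto simp: Ob_def)
    have "rep ob \<in> ob" unfolding rep_def using self a by (metis someI_ex)
    then show ?thesis using key a by simp
  qed
  define V where "V = (\<lambda>x p e. let a = rep (f x) in
     if p = (0::nat) then (if e = (0::nat) then a else q - a + u) else (if e = 0 then q - a else a + u))"
  have sums: "\<forall>x. V x 0 0 + V x 0 1 = q + u \<and> V x 1 0 + V x 1 1 = q + u \<and> V x 0 0 + V x 1 0 = q \<and> V x 0 1 + V x 1 1 = q"
  proof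
    fix x
    show "V x 0 0 + V x 0 1 = q + u \<and> V x 1 0 + V x 1 1 = q + u \<and> V x 0 0 + V x 1 0 = q \<and> V x 0 1 + V x 1 1 = q"
      unfolding V_def Let_def using u(2) by (simp add: algebra_simps)
  qed
  have Vin: "V x p e \<in> f x" if "x < card Ob" for x p e
  proof -
    have fx: "f x \<in> Ob" using f that by (auto simp: bij_betw_def)
    have "V x p e \<in> orb (rep (f x))" unfolding V_def Let_def orb_def by auto
    then show ?thesis using rep[OF fx] by simp
  qed
  have T: "{..<card (UNIV::'a set) div 4} \<times> {..<2::nat} \<times> {..<2::nat} = {..<card Ob} \<times> {..<2} \<times> {..<2}"
    using cO by simp
  have bij: "bij_betw (\<lambda>(x,p,e). V x p e) ({..<card Ob} \<times> {..<2::nat} \<times> {..<2::nat}) UNIV"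
    unfolding bij_betw_def
  proof
    have injV: "x = x' \<and> p = p' \<and> e = e'"
      if h: "x < card Ob" "p < 2" "e < 2" "x' < card Ob" "p' < 2" "e' < 2" "V x p e = V x' p' e'"
      for x p e x' p' e' :: nat
    proof -
      have "f x \<in> Ob" "f x' \<in> Ob" using f h(1,4) by (auto simp: bij_betw_def)
      then have "f x = f x'" using disj Vin[OF h(1)] Vin[OF h(4)] h(7) by metis
      then have xx: "x = x'" using f h(1,4) by (auto simp: bij_betw_def inj_on_def)
      define a where "a = rep (f x)"
      have V': "V x' p' e' = (if p' = 0 then (if e' = 0 then a else q - a + u) else (if e' = 0 then q - a else a + u))"
        unfolding V_def Let_def a_def xx ..
      have V0: "V x p e = (if p = 0 then (if e = 0 then a else q - a + u) else (if e = 0 then q - a else a + u))"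
        unfolding V_def Let_def a_def ..
      have pe: "p = 0 \<or> p = 1" "e = 0 \<or> e = 1" "p' = 0 \<or> p' = 1" "e' = 0 \<or> e' = 1" using h by auto
      have "p = p' \<and> e = e'"
        apply (insert pe h(7) V0 V' d1[of a] d2[of a] d3[of a] d4[of a] d5[of a] d6[of a]
          d1[of a, THEN not_sym] d2[of a, THEN not_sym] d3[of a, THEN not_sym]
          d4[of a, THEN not_sym] d5[of a, THEN not_sym] d6[of a, THEN not_sym])
        by (elim disjE; simp)
      then show "x = x' \<and> p = p' \<and> e = e'" using xx by simp
    qed
    show "inj_on (\<lambda>(x,p,e). V x p e) ({..<card Ob} \<times> {..<2::nat} \<times> {..<2::nat})"
      unfolding inj_on_def using injV by auto
    show "(\<lambda>(x,p,e). V x p e) ` ({..<card Ob} \<times> {..<2::nat} \<times> {..<2::nat}) = UNIV"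
    proof (rule set_eqI, rule iffI)
      fix g :: 'a
      have "orb g \<in> Ob" by (simp add: Ob_def)
      then obtain x where x: "x < card Ob" "f x = orb g" using f
        by (metis atLeastLessThan_iff bij_betw_iff_bijections)
      define a where "a = rep (f x)"
      have "orb a = orb g" using rep \<open>orb g \<in> Ob\<close> x(2) a_def by simp
      then have "g \<in> orb a" using self by simp
      then have "g = a \<or> g = q - a + u \<or> g = q - a \<or> g = a + u" by (simp add: orb_def)
      then have "\<exists>p<2. \<exists>e<2. V x p e = g"
        unfolding V_def Let_def a_def[symmetric]
        by (elim disjE) (rule exI[of _ 0] exI[of _ 1], simp, rule exI[of _ 0] exI[of _ 1], simp)+
      then show "g \<in> (\<lambda>(x,p,e). V x p e) ` ({..<card Ob} \<times> {..<2::nat} \<times> {..<2::nat})"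
        using x(1) by force
    qed simp
  qed
  show ?thesis using bij sums T by metis
qed



theorem proposition5p10:
  fixes m n s k c :: nat
  assumes "even m" and "even n" and "even s" and "even k"
    and "2 \<le> s" and "s \<le> n" and "2 \<le> k" and "k \<le> m"
    and "m * s = n * k" and "1 \<le> c"
    and "card (UNIV :: ('a::{ab_group_add, finite}) set) = n * k * c"
  shows "\<exists>A :: nat \<Rightarrow> nat \<Rightarrow> nat \<Rightarrow> ('a::{ab_group_add, finite}) option. is_MRS m n s k c A"
proof -
  define M where "M = m div 2"
  define N where "N = n div 2"
  define S where "S = s div 2"
  define K2 where "K2 = k div 2"
  have mM: "m = 2 * M" using assms(1) by (simp add: M_def)
  have nN: "n = 2 * N" using assms(2) by (simp add: N_def)
  have sS: "s = 2 * S" using assms(3) by (simp add: S_def)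
  have kK: "k = 2 * K2" using assms(4) by (simp add: K2_def)
  have MS: "M * S = N * K2" using assms(9) mM nN sS kK by simp
  have S0: "0 < S" using assms(5) sS by simp
  have SN: "S \<le> N" using assms(6) sS nN by simp
  have N0: "0 < N" using S0 SN by simp
  have cardU: "card (UNIV::'a set) = 4 * (c * (M * S))" using assms(11) nN kK MS by simp
  then have "4 dvd card (UNIV::'a set)" by simp
  then obtain V :: "nat \<Rightarrow> nat \<Rightarrow> nat \<Rightarrow> 'a" and r q where
    Vbij0: "bij_betw (\<lambda>(x,p,e). V x p e) ({..<card (UNIV::'a set) div 4} \<times> {..<2} \<times> {..<2}) UNIV"
    and Vs: "\<forall>x. V x 0 0 + V x 0 1 = r \<and> V x 1 0 + V x 1 1 = r \<and> V x 0 0 + V x 1 0 = q \<and> V x 0 1 + V x 1 1 = q"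
    using quad_exists by blast
  define D where "D = c * (M * S)"
  have Vbij: "bij_betw (\<lambda>(x,p,e). V x p e) ({..<D} \<times> {..<2} \<times> {..<2}) UNIV"
    using Vbij0 cardU by (simp add: D_def)
  define idx where "idx = (\<lambda>t i j. t * (M * S) + i * S + lpos N S i j)"
  define A where "A = (\<lambda>t I J. if t < c \<and> I < m \<and> J < n \<and> lpos N S (I div 2) (J div 2) < S
      then Some (V (idx t (I div 2) (J div 2)) (I mod 2) (J mod 2)) else None)"
  have Anone: "A t I J \<noteq> None \<longleftrightarrow> t < c \<and> I < m \<and> J < n \<and> lpos N S (I div 2) (J div 2) < S" for t I J
    by (simp add: A_def)
  have Aval: "A t I J = Some (V (idx t (I div 2) (J div 2)) (I mod 2) (J mod 2))"
    if "t < c" "I < m" "J < n" "lpos N S (I div 2) (J div 2) < S" for t I J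
    using that by (simp add: A_def)
  have Fc: "filled_cells m n c A = {(t,I,J). t < c \<and> I < m \<and> J < n \<and> lpos N S (I div 2) (J div 2) < S}"
    unfolding filled_cells_def using Anone by auto
  have dm: "(t * (M * S) + i * S + l) div (M * S) = t \<and> (t * (M * S) + i * S + l) mod (M * S) = i * S + l
      \<and> (i * S + l) div S = i \<and> (i * S + l) mod S = l" if "i < M" "l < S" for t i l
  proof -
    have lt: "i * S + l < M * S"
    proof -
      have "i * S + l < i * S + S" using that by simp
      also have "\<dots> = (i + 1) * S" by simp
      also have "\<dots> \<le> M * S" using that(1) by (intro mult_le_mono1) simp
      finally show ?thesis .
    qed
    have MS0: "M * S \<noteq> 0" using lt by linarith
    have "(t * (M * S) + (i * S + l)) div (M * S) = t" using lt MS0 by (simp add: div_mult_self3)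
    moreover have "(t * (M * S) + (i * S + l)) mod (M * S) = i * S + l" using lt by (simp add: mod_mult_self3)
    moreover have "(i * S + l) div S = i" using that(2) by simp
    moreover have "(i * S + l) mod S = l" using that(2) by simp
    ultimately show ?thesis by (simp add: add.assoc)
  qed
  have xlt: "t * (M * S) + i * S + l < D" if "t < c" "i < M" "l < S" for t i l
  proof -
    have "i * S + l < i * S + S" using that by simp
    also have "\<dots> = (i + 1) * S" by simp
    also have "\<dots> \<le> M * S" using that(2) by (intro mult_le_mono1) simp
    finally have "t * (M * S) + i * S + l < t * (M * S) + M * S" by simp
    also have "\<dots> = (t + 1) * (M * S)" by simp
    also have "\<dots> \<le> c * (M * S)" using that(1) by (intro mult_le_mono1) simp
    finally show ?thesis by (simp add: D_def)
  qed
  have xdec: "x div (M * S) < c \<and> (x mod (M * S)) div S < M \<and> (x mod (M * S)) mod S < S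
      \<and> x = (x div (M * S)) * (M * S) + ((x mod (M * S)) div S) * S + (x mod (M * S)) mod S"
    if "x < D" for x
  proof -
    have MS0: "0 < M * S"
    proof (rule ccontr)
      assume "\<not> 0 < M * S" then have "M * S = 0" by simp
      then have "D = 0" unfolding D_def by (simp only: mult_0_right)
      then show False using that by simp
    qed
    have "x div (M * S) < c" using that MS0 by (simp add: D_def div_less_iff_less_mult)
    moreover have "(x mod (M * S)) div S < M" using MS0 S0 by (simp add: div_less_iff_less_mult)
    moreover have "(x mod (M * S)) mod S < S" using S0 by simp
    moreover have "x = (x div (M * S)) * (M * S) + ((x mod (M * S)) div S) * S + (x mod (M * S)) mod S"
      using div_mult_mod_eq[of x "M * S"] by (simp add: add.assoc)
    ultimately show ?thesis by blast
  qed
  define Phi where "Phi = (\<lambda>(t, I, J). (idx t (I div 2) (J div 2), I mod 2, J mod (2::nat)))"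
  define Psi where "Psi = (\<lambda>(x, p, e).
      let t = x div (M * S); i = (x mod (M * S)) div S; l = (x mod (M * S)) mod S
      in (t, 2 * i + p, 2 * ((i * S + l) mod N) + (e::nat)))"
  have PhiBij: "bij_betw Phi (filled_cells m n c A) ({..<D} \<times> {..<2} \<times> {..<2})"
  proof (rule bij_betw_byWitness[where f' = Psi])
    show "\<forall>a\<in>filled_cells m n c A. Psi (Phi a) = a"
    proof (clarify)
      fix t I J assume "(t, I, J) \<in> filled_cells m n c A"
      then have h: "t < c" "I < m" "J < n" "lpos N S (I div 2) (J div 2) < S" using Fc by auto
      let ?i = "I div 2" let ?j = "J div 2" let ?l = "lpos N S (I div 2) (J div 2)"
      have i: "?i < M" using h(2) mM by simp
      have j: "?j < N" using h(3) nN by simp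
      note d = dm[OF i h(4), of t]
      have jj: "(?i * S + ?l) mod N = ?j" using lpos_A2[OF N0 j] by simp
      show "Psi (Phi (t, I, J)) = (t, I, J)"
        unfolding Phi_def Psi_def idx_def Let_def using d jj by simp
    qed
    show "\<forall>a\<in>{..<D} \<times> {..<2} \<times> {..<2}. Phi (Psi a) = a"
    proof (clarify)
      fix x p e :: nat assume h: "x < D" "p < 2" "e < 2"
      note xd = xdec[OF h(1)]
      define t where "t = x div (M * S)"
      define i where "i = (x mod (M * S)) div S"
      define l where "l = (x mod (M * S)) mod S"
      have hh: "t < c" "i < M" "l < S" "x = t * (M * S) + i * S + l"
        using xd unfolding t_def i_def l_def by auto
      have lN: "l < N" using hh(3) SN by simp
      have lp: "lpos N S i ((i * S + l) mod N) = l" using lpos_A1[OF N0 lN] .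
      have Ps: "Psi (x, p, e) = (t, 2 * i + p, 2 * ((i * S + l) mod N) + e)"
        unfolding Psi_def Let_def t_def i_def l_def by simp
      show "Phi (Psi (x, p, e)) = (x, p, e)"
        unfolding Ps Phi_def idx_def using h(2,3) lp hh(4) by simp
    qed
    show "Phi ` filled_cells m n c A \<subseteq> {..<D} \<times> {..<2} \<times> {..<2}"
    proof (rule image_subsetI)
      fix cell assume cell: "cell \<in> filled_cells m n c A"
      obtain t I J where tIJ: "cell = (t, I, J)" by (cases cell) auto
      from cell have h: "t < c" "I < m" "J < n" "lpos N S (I div 2) (J div 2) < S" using Fc tIJ by auto
      have i: "I div 2 < M" using h(2) mM by simp
      show "Phi cell \<in> {..<D} \<times> {..<2} \<times> {..<2}"
        unfolding tIJ Phi_def idx_def using xlt[OF h(1) i h(4)] by simp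
    qed
    show "Psi ` ({..<D} \<times> {..<2} \<times> {..<2}) \<subseteq> filled_cells m n c A"
    proof (rule image_subsetI)
      fix y assume y: "y \<in> {..<D} \<times> {..<2::nat} \<times> {..<2::nat}"
      obtain x p e where xpe: "y = (x, p, e)" by (cases y) auto
      from y have h: "x < D" "p < 2" "e < 2" unfolding xpe by auto
      note xd = xdec[OF h(1)]
      define t where "t = x div (M * S)"
      define i where "i = (x mod (M * S)) div S"
      define l where "l = (x mod (M * S)) mod S"
      have hh: "t < c" "i < M" "l < S"
        using xd unfolding t_def i_def l_def by auto
      have lN: "l < N" using hh(3) SN by simp
      have lp: "lpos N S i ((i * S + l) mod N) = l" using lpos_A1[OF N0 lN] .
      have Ps: "Psi (x, p, e) = (t, 2 * i + p, 2 * ((i * S + l) mod N) + e)"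
        unfolding Psi_def Let_def t_def i_def l_def by simp
      have jN: "(i * S + l) mod N < N" using N0 by simp
      have I: "2 * i + p < m" using hh(2) h(2) mM by simp
      have J: "2 * ((i * S + l) mod N) + e < n" using jN h(3) nN by simp
      show "Psi y \<in> filled_cells m n c A"
        unfolding xpe Ps Fc using hh(1) I J lp hh(3) h(2,3) by simp
    qed
  qed
  have AV: "A t I J = Some ((\<lambda>(x,p,e). V x p e) (Phi (t, I, J)))" if "(t, I, J) \<in> filled_cells m n c A" for t I J
    using that Fc Aval by (auto simp: Phi_def)
  have comp: "bij_betw ((\<lambda>(x,p,e). V x p e) \<circ> Phi) (filled_cells m n c A) UNIV"
    using bij_betw_trans[OF PhiBij Vbij] .
  have P1: "\<forall>g::'a. \<exists>!pp. pp \<in> filled_cells m n c A \<and> A (fst pp) (fst (snd pp)) (snd (snd pp)) = Some g"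
  proof
    fix g :: 'a
    obtain cell where cell: "cell \<in> filled_cells m n c A" "((\<lambda>(x,p,e). V x p e) \<circ> Phi) cell = g"
      using comp unfolding bij_betw_def by (metis UNIV_I imageE)
    show "\<exists>!pp. pp \<in> filled_cells m n c A \<and> A (fst pp) (fst (snd pp)) (snd (snd pp)) = Some g"
    proof (rule ex1I[of _ cell])
      show "cell \<in> filled_cells m n c A \<and> A (fst cell) (fst (snd cell)) (snd (snd cell)) = Some g"
        using cell AV[of "fst cell" "fst (snd cell)" "snd (snd cell)"] by simp
    next
      fix pp assume pp: "pp \<in> filled_cells m n c A \<and> A (fst pp) (fst (snd pp)) (snd (snd pp)) = Some g"
      then have "((\<lambda>(x,p,e). V x p e) \<circ> Phi) pp = g"
        using AV[of "fst pp" "fst (snd pp)" "snd (snd pp)"] by simp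
      then show "pp = cell" using cell pp comp unfolding bij_betw_def inj_on_def by metis
    qed
  qed
  have rowset: "{J. J < n \<and> A t I J \<noteq> None} = {J. J < 2 * N \<and> J div 2 \<in> {j. j < N \<and> lpos N S (I div 2) j < S}}"
    if "t < c" "I < m" for t I
    using that nN unfolding Anone by auto
  have colset: "{I. I < m \<and> A t I J \<noteq> None} = {I. I < 2 * M \<and> I div 2 \<in> {i. i < M \<and> lpos N S i (J div 2) < S}}"
    if "t < c" "J < n" for t J
    using that mM unfolding Anone by auto
  have P2: "\<forall>t<c. \<forall>I<m. card {J. J < n \<and> A t I J \<noteq> None} = s"
  proof (intro allI impI)
    fix t I assume h: "t < c" "I < m"
    have "card {J. J < n \<and> A t I J \<noteq> None} = 2 * card {j. j < N \<and> lpos N S (I div 2) j < S}"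
      unfolding rowset[OF h] by (rule double_card) auto
    also have "\<dots> = 2 * S"
      using row_set[OF N0 SN, of "I div 2"] by (simp add: card_image)
    finally show "card {J. J < n \<and> A t I J \<noteq> None} = s" using sS by simp
  qed
  have P3: "\<forall>t<c. \<forall>J<n. card {I. I < m \<and> A t I J \<noteq> None} = k"
  proof (intro allI impI)
    fix t J assume h: "t < c" "J < n"
    have "card {I. I < m \<and> A t I J \<noteq> None} = 2 * card {i. i < M \<and> lpos N S i (J div 2) < S}"
      unfolding colset[OF h] by (rule double_card) auto
    also have "\<dots> = 2 * K2"
      using col_card[OF N0 S0 SN MS] h(2) nN by simp
    finally show "card {I. I < m \<and> A t I J \<noteq> None} = k" using kK by simp
  qed
  have P4: "\<forall>t<c. \<forall>I<m. (\<Sum>J | J < n \<and> A t I J \<noteq> None. the (A t I J)) = (\<Sum>l<S. r)"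
  proof (intro allI impI)
    fix t I assume h: "t < c" "I < m"
    let ?P = "{j. j < N \<and> lpos N S (I div 2) j < S}"
    have "(\<Sum>J | J < n \<and> A t I J \<noteq> None. the (A t I J)) = (\<Sum>j\<in>?P. the (A t I (2*j)) + the (A t I (2*j+1)))"
      unfolding rowset[OF h] by (rule double_sum) auto
    also have "\<dots> = (\<Sum>j\<in>?P. r)"
    proof (rule sum.cong)
      fix j assume "j \<in> ?P"
      then have j: "j < N" "lpos N S (I div 2) j < S" by auto
      have "the (A t I (2*j)) + the (A t I (2*j+1)) = V (idx t (I div 2) j) (I mod 2) 0 + V (idx t (I div 2) j) (I mod 2) 1"
        using Aval[of t I "2*j"] Aval[of t I "2*j+1"] h j nN by simp
      also have "\<dots> = r" using Vs by (cases "I mod 2 = 0") (simp_all add: mod2_eq_if)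
      finally show "the (A t I (2*j)) + the (A t I (2*j+1)) = r" .
    qed simp
    also have "\<dots> = (\<Sum>l<card ?P. r)" by (rule sum_const_card) simp
    also have "card ?P = S"
      using row_set[OF N0 SN, of "I div 2"] by (simp add: card_image)
    finally show "(\<Sum>J | J < n \<and> A t I J \<noteq> None. the (A t I J)) = (\<Sum>l<S. r)" .
  qed
  have P5: "\<forall>t<c. \<forall>J<n. (\<Sum>I | I < m \<and> A t I J \<noteq> None. the (A t I J)) = (\<Sum>l<K2. q)"
  proof (intro allI impI)
    fix t J assume h: "t < c" "J < n"
    let ?P = "{i. i < M \<and> lpos N S i (J div 2) < S}"
    have "(\<Sum>I | I < m \<and> A t I J \<noteq> None. the (A t I J)) = (\<Sum>i\<in>?P. the (A t (2*i) J) + the (A t (2*i+1) J))"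
      unfolding colset[OF h] by (rule double_sum) auto
    also have "\<dots> = (\<Sum>i\<in>?P. q)"
    proof (rule sum.cong)
      fix i assume "i \<in> ?P"
      then have i: "i < M" "lpos N S i (J div 2) < S" by auto
      have "the (A t (2*i) J) + the (A t (2*i+1) J) = V (idx t i (J div 2)) 0 (J mod 2) + V (idx t i (J div 2)) 1 (J mod 2)"
        using Aval[of t "2*i" J] Aval[of t "2*i+1" J] h i mM by simp
      also have "\<dots> = q" using Vs by (cases "J mod 2 = 0") (simp_all add: mod2_eq_if)
      finally show "the (A t (2*i) J) + the (A t (2*i+1) J) = q" .
    qed simp
    also have "\<dots> = (\<Sum>l<card ?P. q)" by (rule sum_const_card) simp
    also have "card ?P = K2"
      using col_card[OF N0 S0 SN MS] h(2) nN by simp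
    finally show "(\<Sum>I | I < m \<and> A t I J \<noteq> None. the (A t I J)) = (\<Sum>l<K2. q)" .
  qed
  have "is_MRS m n s k c A"
    unfolding is_MRS_def using P1 P2 P3 P4 P5 by blast
  then show ?thesis by blast
qed

end
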